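(* Let $n\ge1$, $\hat r\in\mathbb R^n$, $\delta\ge0$. For every $\pi\in\Delta_n$, $$\max_{\|\Delta\|_1\le\delta}\mathrm{Reg}(\pi,\hat r+\Delta)=\delta+\max_{1\le i\le n}(\hat r_i-\delta\pi_i)-\langle\pi,\hat r\rangle.$$ Moreover, the maximum is attained by $\Delta^\star=\delta e_k$ for any $k\in\arg\max_{1\le i\le n}\{\hat r_i-\delta\pi_i\}$.
   Context: $\Delta_n:=\{q\in\mathbb R^n_+:\sum_iq_i=1\}$. For $\pi\in\Delta_n$ and $s\in\mathbb R^n$, the regret is $\mathrm{Reg}(\pi,s):=\max_{\beta\in\Delta_n}\langle\beta-\pi,s\rangle$. $e_k$ denotes the $k$-th standard basis vector of $\mathbb R^n$. *)

theory Defs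
  imports "HOL-Analysis.Analysis"
begin

definition prob_simplex :: "(real ^ 'n::finite) set" where
  "prob_simplex = {q. (\<forall>i. 0 \<le> q $ i) \<and> (\<Sum>i\<in>UNIV. q $ i) = 1}"

definition Reg :: "real ^ 'n \<Rightarrow> real ^ 'n \<Rightarrow> real" where
  "Reg \<pi> s = (SUP \<beta>\<in>prob_simplex. (\<beta> - \<pi>) \<bullet> s)"

definition l1norm :: "real ^ 'n \<Rightarrow> real" where
  "l1norm v = (\<Sum>i\<in>UNIV. \<bar>v $ i\<bar>)"

end

theory Submission
  imports Defs
begin

lemma ex_argmax: "\<exists>j. f j = (MAX i\<in>(UNIV::'a::finite set). (f i :: real))"
proof -
  have "Max (range f) \<in> range f" by (rule Max_in) auto
  then show ?thesis by (metis rangeE)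
qed

lemma axis_simplex: "axis k (1::real) \<in> (prob_simplex :: (real^'n::finite) set)"
  unfolding prob_simplex_def by (simp add: axis_def)

lemma reg_eq:
  fixes \<pi> s :: "real ^ 'n::finite"
  shows "Reg \<pi> s = (MAX i\<in>UNIV. s $ i) - \<pi> \<bullet> s"
proof -
  let ?M = "MAX i\<in>UNIV. s $ i"
  obtain j where j: "s $ j = ?M"
    using ex_argmax[of "\<lambda>i. s $ i"] by blast
  have up: "(\<beta> - \<pi>) \<bullet> s \<le> ?M - \<pi> \<bullet> s" if "\<beta> \<in> prob_simplex" for \<beta>
  proof -
    from that have nn: "\<And>i. 0 \<le> \<beta> $ i" and s1: "(\<Sum>i\<in>UNIV. \<beta> $ i) = 1"
      unfolding prob_simplex_def by auto
    have "\<beta> \<bullet> s = (\<Sum>i\<in>UNIV. \<beta> $ i * s $ i)" by (simp add: inner_vec_def)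
    also have "\<dots> \<le> (\<Sum>i\<in>UNIV. \<beta> $ i * ?M)"
      by (intro sum_mono mult_left_mono) (auto simp: nn)
    also have "\<dots> = ?M" using s1 by (simp add: sum_distrib_right[symmetric])
    finally show ?thesis by (simp add: inner_diff_left)
  qed
  have att: "(axis j 1 - \<pi>) \<bullet> s = ?M - \<pi> \<bullet> s"
    using j by (simp add: inner_diff_left inner_axis')
  show ?thesis unfolding Reg_def
  proof (rule cSup_eq_maximum)
    show "Max (range (($) s)) - \<pi> \<bullet> s \<in> (\<lambda>\<beta>. (\<beta> - \<pi>) \<bullet> s) ` prob_simplex"
      using att axis_simplex[of j] by (metis image_eqI)
  qed (use up in blast)
qed


lemma bound:
  fixes r D \<pi> :: "real ^ 'n::finite" and \<delta> :: real
  assumes "\<pi> \<in> prob_simplex" "l1norm D \<le> \<delta>"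
  shows "Reg \<pi> (r + D) \<le> \<delta> + (MAX i\<in>UNIV. r $ i - \<delta> * \<pi> $ i) - \<pi> \<bullet> r"
proof -
  from assms(1) have nn: "\<And>i. 0 \<le> \<pi> $ i" and s1: "(\<Sum>i\<in>UNIV. \<pi> $ i) = 1"
    unfolding prob_simplex_def by auto
  obtain j where j: "(r + D) $ j = (MAX i\<in>UNIV. (r + D) $ i)"
    using ex_argmax[of "\<lambda>i. (r + D) $ i"] by blast
  let ?R = "UNIV - {j}"
  define A where "A = (\<Sum>i\<in>?R. \<bar>D $ i\<bar>)"
  have hA: "\<bar>D $ j\<bar> + A \<le> \<delta>" using assms(2)
    unfolding l1norm_def A_def by (simp add: sum.remove[of UNIV j])
  have sR: "(\<Sum>i\<in>?R. \<pi> $ i) = 1 - \<pi> $ j" using s1 by (simp add: sum.remove[of UNIV j])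
  have le: "\<pi> $ i \<le> 1 - \<pi> $ j" if "i \<in> ?R" for i
    using member_le_sum[of i ?R "\<lambda>i. \<pi> $ i"] that nn sR by auto
  have pj1: "\<pi> $ j \<le> 1" using sR sum_nonneg[of ?R "\<lambda>i. \<pi> $ i"] nn by auto
  have "(\<Sum>i\<in>?R. \<pi> $ i * D $ i) \<ge> - (\<Sum>i\<in>?R. (1 - \<pi> $ j) * \<bar>D $ i\<bar>)"
  proof -
    have "(\<Sum>i\<in>?R. - ((1 - \<pi> $ j) * \<bar>D $ i\<bar>)) \<le> (\<Sum>i\<in>?R. \<pi> $ i * D $ i)"
    proof (rule sum_mono)
      fix i assume i: "i \<in> ?R"
      have "\<pi> $ i * \<bar>D $ i\<bar> \<le> (1 - \<pi> $ j) * \<bar>D $ i\<bar>" using le[OF i] by (simp add: mult_right_mono)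
      moreover have "- (\<pi> $ i * \<bar>D $ i\<bar>) \<le> \<pi> $ i * D $ i" using nn[of i]
      proof -
        have "\<pi> $ i * (- D $ i) \<le> \<pi> $ i * \<bar>D $ i\<bar>" by (rule mult_left_mono) (auto simp: nn)
        then show ?thesis by simp
      qed
      ultimately show "- ((1 - \<pi> $ j) * \<bar>D $ i\<bar>) \<le> \<pi> $ i * D $ i" by linarith
    qed
    then show ?thesis by (simp add: sum_negf)
  qed
  hence h2: "(\<Sum>i\<in>?R. \<pi> $ i * D $ i) \<ge> - ((1 - \<pi> $ j) * A)"
    by (simp add: A_def sum_distrib_left)
  have pD: "\<pi> \<bullet> D = \<pi> $ j * D $ j + (\<Sum>i\<in>?R. \<pi> $ i * D $ i)"
    by (simp add: inner_vec_def sum.remove[of UNIV j])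
  have key: "D $ j - \<pi> \<bullet> D + \<delta> * \<pi> $ j \<le> \<delta>"
  proof -
    have "D $ j - \<pi> $ j * D $ j \<le> (1 - \<pi> $ j) * \<bar>D $ j\<bar>"
    proof -
      have "(1 - \<pi> $ j) * D $ j \<le> (1 - \<pi> $ j) * \<bar>D $ j\<bar>" by (rule mult_left_mono) (use pj1 in auto)
      then show ?thesis by (simp add: algebra_simps)
    qed
    moreover have "(1 - \<pi> $ j) * (\<bar>D $ j\<bar> + A) \<le> (1 - \<pi> $ j) * \<delta>"
      using hA pj1 by (simp add: mult_left_mono)
    ultimately show ?thesis using pD h2 by (simp add: algebra_simps)
  qed
  have "r $ j - \<delta> * \<pi> $ j \<le> (MAX i\<in>UNIV. r $ i - \<delta> * \<pi> $ i)" by simp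
  moreover have "\<pi> \<bullet> (r + D) = \<pi> \<bullet> r + \<pi> \<bullet> D" by (simp add: inner_add_right)
  moreover have "(r + D) $ j = r $ j + D $ j" by simp
  ultimately show ?thesis using key j unfolding reg_eq by linarith
qed

lemma attain:
  fixes r \<pi> :: "real ^ 'n::finite" and \<delta> :: real
  assumes "r $ k - \<delta> * \<pi> $ k = (MAX i\<in>UNIV. r $ i - \<delta> * \<pi> $ i)"
  shows "Reg \<pi> (r + \<delta> *\<^sub>R axis k 1) \<ge> \<delta> + (MAX i\<in>UNIV. r $ i - \<delta> * \<pi> $ i) - \<pi> \<bullet> r"
proof -
  have "r $ k + \<delta> \<le> (MAX i\<in>UNIV. (r + \<delta> *\<^sub>R axis k 1) $ i)"
    by (rule Max_ge_iff[THEN iffD2]) (auto simp: axis_def intro!: bexI[of _ k])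
  moreover have "\<pi> \<bullet> axis k 1 = \<pi> $ k" by (simp add: inner_axis)
  ultimately show ?thesis unfolding reg_eq using assms by (simp add: inner_add_right)
qed

lemma l1_axis: "(\<delta>::real) \<ge> 0 \<Longrightarrow> l1norm (\<delta> *\<^sub>R axis k (1::real)) \<le> \<delta>"
proof -
  assume d: "\<delta> \<ge> 0"
  have "(\<Sum>i\<in>UNIV. \<bar>(\<delta> *\<^sub>R axis k (1::real)) $ i\<bar>) = (\<Sum>i\<in>UNIV. if i = k then \<delta> else 0)"
    by (rule sum.cong) (auto simp: axis_def d)
  then show ?thesis unfolding l1norm_def by simp
qed

theorem mainTheorem4:
  fixes rhat :: "real ^ 'n" and \<delta> :: real and \<pi> :: "real ^ 'n"
  assumes "\<delta> \<ge> 0" and "\<pi> \<in> prob_simplex"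
  shows "(SUP D\<in>{D. l1norm D \<le> \<delta>}. Reg \<pi> (rhat + D))
           = \<delta> + (MAX i\<in>UNIV. rhat $ i - \<delta> * \<pi> $ i) - \<pi> \<bullet> rhat
       \<and> (\<forall>k. rhat $ k - \<delta> * \<pi> $ k = (MAX i\<in>UNIV. rhat $ i - \<delta> * \<pi> $ i)
             \<longrightarrow> l1norm (\<delta> *\<^sub>R axis k 1) \<le> \<delta>
               \<and> Reg \<pi> (rhat + \<delta> *\<^sub>R axis k 1)
                   = (SUP D\<in>{D. l1norm D \<le> \<delta>}. Reg \<pi> (rhat + D)))"
proof -
  let ?V = "\<delta> + (MAX i\<in>UNIV. rhat $ i - \<delta> * \<pi> $ i) - \<pi> \<bullet> rhat"
  have eq: "Reg \<pi> (rhat + \<delta> *\<^sub>R axis k 1) = ?V"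
    if "rhat $ k - \<delta> * \<pi> $ k = (MAX i\<in>UNIV. rhat $ i - \<delta> * \<pi> $ i)" for k
    using attain[OF that] bound[OF assms(2) l1_axis[OF assms(1)], where r=rhat and k1=k] by linarith
  obtain k where k: "rhat $ k - \<delta> * \<pi> $ k = (MAX i\<in>UNIV. rhat $ i - \<delta> * \<pi> $ i)"
    using ex_argmax[of "\<lambda>i. rhat $ i - \<delta> * \<pi> $ i"] by blast
  have S: "(SUP D\<in>{D. l1norm D \<le> \<delta>}. Reg \<pi> (rhat + D)) = ?V"
  proof (rule cSup_eq_maximum)
    show "?V \<in> (\<lambda>D. Reg \<pi> (rhat + D)) ` {D. l1norm D \<le> \<delta>}"
      using eq[OF k] l1_axis[OF assms(1), of k] by (metis (mono_tags, lifting) image_eqI mem_Collect_eq)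
  qed (use bound[OF assms(2)] in blast)
  show ?thesis using S eq l1_axis[OF assms(1)] by auto
qed

end
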